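(* Let $G$ be a (finite, simple) graph with $\operatorname{mad}(G) < 3$ and $\Delta(G) \leq 4$. Then $\chi'_{s}(G) \leq 3\Delta(G) + 1$.
   Context: $\Delta(G)$ denotes the maximum degree of $G$. The maximum average degree is $\operatorname{mad}(G) = \max_{H \subseteq G} \frac{2|E(H)|}{|V(H)|}$, the maximum over all (nonempty) subgraphs $H$ of $G$. A strong edge coloring of $G$ is an assignment of colors to the edges such that any two distinct edges $e_1 = uv$ and $e_2$ receive different colors whenever $e_2$ is incident with a vertex of $N_G(u) \cup N_G(v)$ (equivalently, a proper edge coloring in which every color class is an induced matching). The strong chromatic index $\chi'_s(G)$ is the minimum number of colors in a strong edge coloring of $G$. *)

theory Defs
  imports Main "HOL-Library.Disjoint_Sets" Complex_Main
begin

definition finite_simple_graph :: "'a set \<Rightarrow> 'a set set \<Rightarrow> bool" where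
  "finite_simple_graph V E \<longleftrightarrow> finite V \<and> (\<forall>e\<in>E. card e = 2 \<and> e \<subseteq> V)"

definition neighbors :: "'a set set \<Rightarrow> 'a \<Rightarrow> 'a set" where
  "neighbors E u = {w. {u, w} \<in> E}"

definition degree :: "'a set set \<Rightarrow> 'a \<Rightarrow> nat" where
  "degree E u = card (neighbors E u)"

definition max_degree :: "'a set \<Rightarrow> 'a set set \<Rightarrow> nat" where
  "max_degree V E = Max (insert 0 (degree E ` V))"

definition subgraph :: "'a set \<Rightarrow> 'a set set \<Rightarrow> 'a set \<Rightarrow> 'a set set \<Rightarrow> bool" where
  "subgraph W F V E \<longleftrightarrow> W \<subseteq> V \<and> F \<subseteq> E \<and> (\<forall>e\<in>F. e \<subseteq> W)"

definition mad :: "'a set \<Rightarrow> 'a set set \<Rightarrow> real" where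
  "mad V E = Max {2 * real (card F) / real (card W) | W F. subgraph W F V E \<and> W \<noteq> {}}"

definition strong_edge_coloring :: "'a set set \<Rightarrow> ('a set \<Rightarrow> nat) \<Rightarrow> bool" where
  "strong_edge_coloring E c \<longleftrightarrow>
     (\<forall>u v e2. {u, v} \<in> E \<longrightarrow> e2 \<in> E \<longrightarrow> e2 \<noteq> {u, v} \<longrightarrow>
        e2 \<inter> (neighbors E u \<union> neighbors E v) \<noteq> {} \<longrightarrow> c {u, v} \<noteq> c e2)"

definition strong_chromatic_index :: "'a set set \<Rightarrow> nat" where
  "strong_chromatic_index E =
     (LEAST k. \<exists>c. strong_edge_coloring E c \<and> (\<forall>e\<in>E. c e < k))"

end

theory Submission
  imports Defs
begin


definition conf :: "'a set set \<Rightarrow> 'a set \<Rightarrow> 'a set \<Rightarrow> bool" where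
  "conf E e1 e2 \<longleftrightarrow> e2 \<noteq> e1 \<and> e2 \<inter> (\<Union>x\<in>e1. neighbors E x) \<noteq> {}"

lemma conf_sym: "conf E e1 e2 \<Longrightarrow> conf E e2 e1"
proof -
  assume "conf E e1 e2"
  then obtain y x where "y \<in> e2" "x \<in> e1" "{x,y} \<in> E" "e2 \<noteq> e1"
    unfolding conf_def neighbors_def by blast
  then have "x \<in> e1 \<inter> (\<Union>u\<in>e2. neighbors E u)" unfolding neighbors_def by (auto simp: insert_commute)
  then show ?thesis using \<open>e2 \<noteq> e1\<close> unfolding conf_def by blast
qed

lemma fsg_finE: "finite_simple_graph V E \<Longrightarrow> finite E"
  unfolding finite_simple_graph_def by (meson Pow_iff finite_Pow_iff finite_subset subsetI)

lemma fsg_edge: "finite_simple_graph V E \<Longrightarrow> e \<in> E \<Longrightarrow> \<exists>a b. a \<noteq> b \<and> e = {a,b}"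
  unfolding finite_simple_graph_def by (metis card_2_iff)

lemma fsg_nbr_sub: "finite_simple_graph V E \<Longrightarrow> neighbors E u \<subseteq> V"
  unfolding finite_simple_graph_def neighbors_def by auto

lemma fsg_nbr_fin: "finite_simple_graph V E \<Longrightarrow> finite (neighbors E u)"
  by (meson finite_simple_graph_def fsg_nbr_sub finite_subset)

lemma fsg_nbr_irr: "finite_simple_graph V E \<Longrightarrow> u \<notin> neighbors E u"
  unfolding finite_simple_graph_def neighbors_def by auto

lemma nbr_sym: "w \<in> neighbors E u \<longleftrightarrow> u \<in> neighbors E w"
  unfolding neighbors_def by (simp add: insert_commute)

lemma strong_from_conf:
  assumes "\<forall>e1\<in>E. \<forall>e2\<in>E. conf E e1 e2 \<longrightarrow> c e1 \<noteq> c e2"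
  shows "strong_edge_coloring E c"
  unfolding strong_edge_coloring_def
proof (intro allI impI)
  fix u v e2 assume h: "{u,v} \<in> E" "e2 \<in> E" "e2 \<noteq> {u,v}" "e2 \<inter> (neighbors E u \<union> neighbors E v) \<noteq> {}"
  have "conf E {u,v} e2" unfolding conf_def using h by auto
  then show "c {u,v} \<noteq> c e2" using assms h by blast
qed

lemma conf_from_strong:
  assumes "finite_simple_graph V E" "strong_edge_coloring E c" "e1 \<in> E" "e2 \<in> E" "conf E e1 e2"
  shows "c e1 \<noteq> c e2"
proof -
  obtain a b where ab: "e1 = {a,b}" using fsg_edge assms by metis
  have "e2 \<noteq> {a,b}" "e2 \<inter> (neighbors E a \<union> neighbors E b) \<noteq> {}"
    using assms(5) ab unfolding conf_def by auto
  then show ?thesis using assms(2,3,4) ab unfolding strong_edge_coloring_def by blast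
qed

lemma greedy:
  assumes "finite E0" "\<forall>e1\<in>E0. \<forall>e2\<in>E0. conf E e1 e2 \<longrightarrow> c e1 \<noteq> c e2" "\<forall>e\<in>E0. c e < K"
    "\<forall>i<length fs. card {e\<in>E0 \<union> set (take i fs). conf E (fs!i) e} < K"
  shows "\<exists>c'. (\<forall>e1\<in>E0 \<union> set fs. \<forall>e2\<in>E0 \<union> set fs. conf E e1 e2 \<longrightarrow> c' e1 \<noteq> c' e2)
      \<and> (\<forall>e\<in>E0 \<union> set fs. c' e < K)"
  using assms(4)
proof (induction fs rule: rev_induct)
  case Nil
  then show ?case using assms(2,3) by auto
next
  case (snoc a xs)
  have "\<forall>i<length xs. card {e\<in>E0 \<union> set (take i xs). conf E (xs!i) e} < K"
  proof (intro allI impI)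
    fix i assume "i < length xs"
    then show "card {e\<in>E0 \<union> set (take i xs). conf E (xs!i) e} < K"
      using snoc.prems[rule_format, of i] by (simp add: nth_append)
  qed
  then obtain c' where c': "\<forall>e1\<in>E0 \<union> set xs. \<forall>e2\<in>E0 \<union> set xs. conf E e1 e2 \<longrightarrow> c' e1 \<noteq> c' e2"
    "\<forall>e\<in>E0 \<union> set xs. c' e < K" using snoc.IH by blast
  define A where "A = {e\<in>E0 \<union> set xs. conf E a e}"
  have cA: "card A < K" using snoc.prems[rule_format, of "length xs"] unfolding A_def by simp
  have fA: "finite A" unfolding A_def using assms(1) by auto
  have "card (c' ` A) < K" using cA card_image_le[OF fA, of c'] by linarith
  hence "\<not> {..<K} \<subseteq> c' ` A" by (metis card_lessThan card_mono fA finite_imageI not_le)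
  then obtain col where col: "col < K" "col \<notin> c' ` A" by blast
  define c'' where "c'' = c'(a := col)"
  show ?case
  proof (intro exI[of _ c''] conjI ballI impI)
    fix e assume "e \<in> E0 \<union> set (xs @ [a])"
    then show "c'' e < K" using c'(2) col(1) unfolding c''_def by auto
  next
    fix e1 e2 assume h: "e1 \<in> E0 \<union> set (xs @ [a])" "e2 \<in> E0 \<union> set (xs @ [a])" "conf E e1 e2"
    have ne: "e1 \<noteq> e2" using h(3) unfolding conf_def by auto
    show "c'' e1 \<noteq> c'' e2"
    proof (cases "e1 = a")
      case True
      then have "e2 \<in> A" using h ne unfolding A_def by auto
      then show ?thesis using True ne col unfolding c''_def by auto
    next
      case False
      note F1 = False
      show ?thesis
      proof (cases "e2 = a")
        case True
        then have "e1 \<in> A" using h F1 conf_sym unfolding A_def by auto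
        then show ?thesis using True F1 col unfolding c''_def by auto
      next
        case False
        then show ?thesis using F1 h c'(1) unfolding c''_def by auto
      qed
    qed
  qed
qed

definition Red :: "'a set set \<Rightarrow> 'a \<Rightarrow> nat \<Rightarrow> bool" where
  "Red E v K \<longleftrightarrow> (\<exists>fs. distinct fs \<and> set fs \<subseteq> E \<and> {e\<in>E. v\<in>e} \<subseteq> set fs \<and>
     (\<forall>i<length fs. card ({e\<in>E. conf E (fs!i) e} - set (drop (Suc i) fs)) < K))"

lemma fsg_del: "finite_simple_graph V E \<Longrightarrow> finite_simple_graph (V - {v}) {e\<in>E. v\<notin>e}"
  unfolding finite_simple_graph_def by auto

lemma reduce:
  assumes fsg: "finite_simple_graph V E"
    and col: "strong_edge_coloring {e\<in>E. v\<notin>e} c" "\<forall>e\<in>{e\<in>E. v\<notin>e}. c e < K"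
    and R: "Red E v K"
  shows "\<exists>c. strong_edge_coloring E c \<and> (\<forall>e\<in>E. c e < K)"
proof -
  obtain fs where fs: "distinct fs" "set fs \<subseteq> E" "{e\<in>E. v\<in>e} \<subseteq> set fs"
    "\<forall>i<length fs. card ({e\<in>E. conf E (fs!i) e} - set (drop (Suc i) fs)) < K"
    using R unfolding Red_def by blast
  define E' where "E' = {e\<in>E. v\<notin>e}"
  define E0 where "E0 = E' - set fs"
  have finE: "finite E" using fsg fsg_finE by blast
  have fsg': "finite_simple_graph (V - {v}) E'" using fsg_del[OF fsg] unfolding E'_def .
  have f0: "finite E0" unfolding E0_def E'_def using finE by auto
  have good: "\<forall>e1\<in>E0. \<forall>e2\<in>E0. conf E e1 e2 \<longrightarrow> c e1 \<noteq> c e2"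
  proof (intro ballI impI)
    fix e1 e2 assume h: "e1 \<in> E0" "e2 \<in> E0" "conf E e1 e2"
    have "conf E' e1 e2"
    proof -
      obtain y x where yx: "y \<in> e2" "x \<in> e1" "y \<in> neighbors E x" "e2 \<noteq> e1"
        using h(3) unfolding conf_def by blast
      have "v \<notin> e1" "v \<notin> e2" using h unfolding E0_def E'_def by auto
      then have "{x,y} \<in> E'" using yx unfolding E'_def neighbors_def by auto
      then have "y \<in> neighbors E' x" unfolding neighbors_def by auto
      then show ?thesis using yx unfolding conf_def by blast
    qed
    moreover have "e1 \<in> E'" "e2 \<in> E'" using h unfolding E0_def by auto
    ultimately show "c e1 \<noteq> c e2" using conf_from_strong[OF fsg' col(1)[folded E'_def]] by blast
  qed
  have cK: "\<forall>e\<in>E0. c e < K" using col(2) unfolding E0_def E'_def by auto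
  have cnt: "\<forall>i<length fs. card {e\<in>E0 \<union> set (take i fs). conf E (fs!i) e} < K"
  proof (intro allI impI)
    fix i assume i: "i < length fs"
    have dec: "fs = take i fs @ fs!i # drop (Suc i) fs" using i by (simp add: id_take_nth_drop)
    have "distinct (take i fs @ fs!i # drop (Suc i) fs)" by (subst dec[symmetric]) (rule fs(1))
    then have disj: "set (take i fs) \<inter> set (drop (Suc i) fs) = {}" by auto
    have "{e\<in>E0 \<union> set (take i fs). conf E (fs!i) e} \<subseteq> {e\<in>E. conf E (fs!i) e} - set (drop (Suc i) fs)"
    proof
      fix e assume "e \<in> {e\<in>E0 \<union> set (take i fs). conf E (fs!i) e}"
      then have "e \<in> E0 \<or> e \<in> set (take i fs)" "conf E (fs!i) e" by auto
      moreover have "set (take i fs) \<subseteq> E" using fs(2) set_take_subset by (metis order_trans)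
      moreover have "set (drop (Suc i) fs) \<subseteq> set fs" by (rule set_drop_subset)
      ultimately show "e \<in> {e\<in>E. conf E (fs!i) e} - set (drop (Suc i) fs)"
        using disj unfolding E0_def E'_def by auto
    qed
    then have "card {e\<in>E0 \<union> set (take i fs). conf E (fs!i) e} \<le> card ({e\<in>E. conf E (fs!i) e} - set (drop (Suc i) fs))"
      using finE by (intro card_mono) auto
    then show "card {e\<in>E0 \<union> set (take i fs). conf E (fs!i) e} < K" using fs(4) i by fastforce
  qed
  obtain c' where c': "\<forall>e1\<in>E0 \<union> set fs. \<forall>e2\<in>E0 \<union> set fs. conf E e1 e2 \<longrightarrow> c' e1 \<noteq> c' e2"
    "\<forall>e\<in>E0 \<union> set fs. c' e < K" using greedy[OF f0 good cK cnt] by blast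
  have "E0 \<union> set fs = E" using fs(2,3) unfolding E0_def E'_def by auto
  then show ?thesis using c' strong_from_conf by metis
qed



definition edges_at :: "'a set set \<Rightarrow> 'a \<Rightarrow> 'a set set" where
  "edges_at E y = {e\<in>E. y\<in>e}"

lemma edges_at_eq: assumes "finite_simple_graph V E"
  shows "edges_at E y = (\<lambda>w. {y,w}) ` neighbors E y"
proof
  show "edges_at E y \<subseteq> (\<lambda>w. {y,w}) ` neighbors E y"
  proof
    fix e assume "e \<in> edges_at E y"
    then have e: "e \<in> E" "y \<in> e" unfolding edges_at_def by auto
    obtain a b where ab: "a \<noteq> b" "e = {a,b}" using fsg_edge[OF assms e(1)] by blast
    show "e \<in> (\<lambda>w. {y,w}) ` neighbors E y"
    proof (cases "y = a")
      case True
      then show ?thesis using ab e unfolding neighbors_def by auto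
    next
      case False
      then have "y = b" using ab e by auto
      then show ?thesis using ab e unfolding neighbors_def by (auto simp: insert_commute)
    qed
  qed
next
  show "(\<lambda>w. {y,w}) ` neighbors E y \<subseteq> edges_at E y"
    unfolding edges_at_def neighbors_def by auto
qed

lemma card_edges_at: assumes "finite_simple_graph V E"
  shows "card (edges_at E y) = degree E y"
proof -
  have "inj_on (\<lambda>w. {y,w}) (neighbors E y)"
    by (auto simp: inj_on_def doubleton_eq_iff)
  then show ?thesis unfolding degree_def edges_at_eq[OF assms] by (simp add: card_image)
qed

lemma fin_edges_at: "finite_simple_graph V E \<Longrightarrow> finite (edges_at E y)"
proof -
  assume "finite_simple_graph V E"
  then have "finite E" by (rule fsg_finE)
  then show ?thesis unfolding edges_at_def by simp
qed

lemma card_edges_at_minus: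
  assumes "finite_simple_graph V E" "{y,u} \<in> E"
  shows "card (edges_at E y - {{y,u}}) \<le> degree E y - 1"
proof -
  have "{y,u} \<in> edges_at E y" using assms(2) unfolding edges_at_def by auto
  then show ?thesis using card_edges_at[OF assms(1)] fin_edges_at[OF assms(1)] by simp
qed

definition Bd :: "'a set set \<Rightarrow> 'a \<Rightarrow> 'a \<Rightarrow> nat" where
  "Bd E u v = (degree E u - 1) + (degree E v - 1)
     + (\<Sum>y\<in>neighbors E u - {v}. degree E y - 1) + (\<Sum>y\<in>neighbors E v - {u}. degree E y - 1)"

lemma conf_sub:
  assumes "{u,v} \<in> E"
  shows "{e\<in>E. conf E {u,v} e} \<subseteq> (edges_at E u - {{u,v}}) \<union> (edges_at E v - {{v,u}})
     \<union> (\<Union>y\<in>neighbors E u - {v}. edges_at E y - {{y,u}})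
     \<union> (\<Union>y\<in>neighbors E v - {u}. edges_at E y - {{y,v}})"
proof
  fix e assume "e \<in> {e\<in>E. conf E {u,v} e}"
  then have e: "e \<in> E" "e \<noteq> {u,v}" and "\<exists>y\<in>e. \<exists>x\<in>{u,v}. {x,y} \<in> E"
    unfolding conf_def neighbors_def by auto
  then obtain y x where yx: "y \<in> e" "x \<in> {u,v}" "{x,y} \<in> E" by blast
  have uv: "{v,u} = {u,v}" by (simp add: insert_commute)
  show "e \<in> (edges_at E u - {{u,v}}) \<union> (edges_at E v - {{v,u}})
     \<union> (\<Union>y\<in>neighbors E u - {v}. edges_at E y - {{y,u}})
     \<union> (\<Union>y\<in>neighbors E v - {u}. edges_at E y - {{y,v}})"
  proof (cases "x = u")
    case True
    show ?thesis
    proof (cases "y = v \<or> y = u")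
      case True
      then show ?thesis using e yx uv unfolding edges_at_def by auto
    next
      case False
      then have y: "y \<in> neighbors E u - {v}" using yx \<open>x = u\<close> unfolding neighbors_def by auto
      show ?thesis
      proof (cases "e = {y,u}")
        case True
        then show ?thesis using e unfolding edges_at_def by auto
      next
        case False
        then have "e \<in> edges_at E y - {{y,u}}" using e yx unfolding edges_at_def by auto
        then show ?thesis using y by blast
      qed
    qed
  next
    case False
    then have xv: "x = v" using yx by auto
    show ?thesis
    proof (cases "y = v \<or> y = u")
      case True
      then show ?thesis using e yx uv unfolding edges_at_def by auto
    next
      case False
      then have y: "y \<in> neighbors E v - {u}" using yx xv unfolding neighbors_def by auto
      show ?thesis
      proof (cases "e = {y,v}")
        case True
        then show ?thesis using e uv unfolding edges_at_def by auto
      next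
        case False
        then have "e \<in> edges_at E y - {{y,v}}" using e yx unfolding edges_at_def by auto
        then show ?thesis using y by blast
      qed
    qed
  qed
qed

lemma conf_card:
  assumes fsg: "finite_simple_graph V E" and uv: "{u,v} \<in> E"
  shows "card {e\<in>E. conf E {u,v} e} \<le> Bd E u v"
proof -
  have uv': "{v,u} \<in> E" using uv by (simp add: insert_commute)
  have fe: "\<And>y. finite (edges_at E y)" using fin_edges_at[OF fsg] .
  have fn: "\<And>y. finite (neighbors E y)" using fsg_nbr_fin[OF fsg] .
  have c1: "card (edges_at E u - {{u,v}}) \<le> degree E u - 1" using card_edges_at_minus[OF fsg uv] .
  have c2: "card (edges_at E v - {{v,u}}) \<le> degree E v - 1" using card_edges_at_minus[OF fsg uv'] .
  have c3: "card (\<Union>y\<in>neighbors E u - {v}. edges_at E y - {{y,u}}) \<le> (\<Sum>y\<in>neighbors E u - {v}. degree E y - 1)"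
  proof -
    have "card (\<Union>y\<in>neighbors E u - {v}. edges_at E y - {{y,u}}) \<le> (\<Sum>y\<in>neighbors E u - {v}. card (edges_at E y - {{y,u}}))"
      by (rule card_UN_le) (use fn in auto)
    also have "\<dots> \<le> (\<Sum>y\<in>neighbors E u - {v}. degree E y - 1)"
    proof (rule sum_mono)
      fix y assume "y \<in> neighbors E u - {v}"
      then have "{y,u} \<in> E" unfolding neighbors_def by (auto simp: insert_commute)
      then show "card (edges_at E y - {{y,u}}) \<le> degree E y - 1" using card_edges_at_minus[OF fsg] by blast
    qed
    finally show ?thesis .
  qed
  have c4: "card (\<Union>y\<in>neighbors E v - {u}. edges_at E y - {{y,v}}) \<le> (\<Sum>y\<in>neighbors E v - {u}. degree E y - 1)"
  proof -
    have "card (\<Union>y\<in>neighbors E v - {u}. edges_at E y - {{y,v}}) \<le> (\<Sum>y\<in>neighbors E v - {u}. card (edges_at E y - {{y,v}}))"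
      by (rule card_UN_le) (use fn in auto)
    also have "\<dots> \<le> (\<Sum>y\<in>neighbors E v - {u}. degree E y - 1)"
    proof (rule sum_mono)
      fix y assume "y \<in> neighbors E v - {u}"
      then have "{y,v} \<in> E" unfolding neighbors_def by (auto simp: insert_commute)
      then show "card (edges_at E y - {{y,v}}) \<le> degree E y - 1" using card_edges_at_minus[OF fsg] by blast
    qed
    finally show ?thesis .
  qed
  let ?U = "(edges_at E u - {{u,v}}) \<union> (edges_at E v - {{v,u}})
     \<union> (\<Union>y\<in>neighbors E u - {v}. edges_at E y - {{y,u}})
     \<union> (\<Union>y\<in>neighbors E v - {u}. edges_at E y - {{y,v}})"
  have fU: "finite ?U" using fe fn by auto
  have "card {e\<in>E. conf E {u,v} e} \<le> card ?U" by (rule card_mono[OF fU conf_sub[OF uv]])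
  also have "\<dots> \<le> card (edges_at E u - {{u,v}}) + card (edges_at E v - {{v,u}})
     + card (\<Union>y\<in>neighbors E u - {v}. edges_at E y - {{y,u}})
     + card (\<Union>y\<in>neighbors E v - {u}. edges_at E y - {{y,v}})"
    by (meson card_Un_le add_mono le_trans order_refl)
  also have "\<dots> \<le> Bd E u v" unfolding Bd_def using c1 c2 c3 c4 by linarith
  finally show ?thesis .
qed

lemma handshake:
  assumes fsg: "finite_simple_graph V E"
  shows "(\<Sum>u\<in>V. degree E u) = 2 * card E"
proof -
  have fV: "finite V" using fsg unfolding finite_simple_graph_def by auto
  have fE: "finite E" using fsg_finE[OF fsg] .
  have "(\<Sum>u\<in>V. degree E u) = (\<Sum>u\<in>V. card {e\<in>E. u\<in>e})"
    using card_edges_at[OF fsg] unfolding edges_at_def by simp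
  also have "\<dots> = (\<Sum>u\<in>V. \<Sum>e\<in>E. if u\<in>e then 1 else 0)"
    using fE by (simp add: sum.inter_filter[symmetric])
  also have "\<dots> = (\<Sum>e\<in>E. \<Sum>u\<in>V. if u\<in>e then 1 else 0)" by (rule sum.swap)
  also have "\<dots> = (\<Sum>e\<in>E. card {u\<in>V. u\<in>e})"
    using fV by (simp add: sum.inter_filter[symmetric])
  also have "\<dots> = (\<Sum>e\<in>E. 2)"
  proof (rule sum.cong)
    fix e assume "e \<in> E"
    then have "{u\<in>V. u\<in>e} = e" "card e = 2" using fsg unfolding finite_simple_graph_def by auto
    then show "card {u\<in>V. u\<in>e} = 2" by simp
  qed simp
  finally show ?thesis by simp
qed



lemma nbr_edge: "w \<in> neighbors E v \<Longrightarrow> {v,w} \<in> E"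
  unfolding neighbors_def by auto

lemma conf_I: "e2 \<noteq> e1 \<Longrightarrow> y \<in> e2 \<Longrightarrow> x \<in> e1 \<Longrightarrow> y \<in> neighbors E x \<Longrightarrow> conf E e1 e2"
  unfolding conf_def by blast

lemma edges_at_v_sub:
  assumes fsg: "finite_simple_graph V E"
  shows "{e\<in>E. v\<in>e} = (\<lambda>w. {v,w}) ` neighbors E v"
  using edges_at_eq[OF fsg, of v] unfolding edges_at_def .

lemma fin_conf: "finite_simple_graph V E \<Longrightarrow> finite {e\<in>E. conf E a e}"
proof -
  assume "finite_simple_graph V E"
  then have "finite E" by (rule fsg_finE)
  then show ?thesis by simp
qed

lemma Red0:
  assumes fsg: "finite_simple_graph V E" and "neighbors E v = {}"
  shows "Red E v K"
  unfolding Red_def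
  by (rule exI[of _ "[]"]) (use edges_at_v_sub[OF fsg, of v] assms(2) in auto)

lemma Red1:
  assumes fsg: "finite_simple_graph V E" and N: "neighbors E v = {w}" and B: "Bd E v w < K"
  shows "Red E v K"
  unfolding Red_def
proof (rule exI[of _ "[{v,w}]"], intro conjI allI impI)
  have "{v,w} \<in> E" using N nbr_edge by fastforce
  then show "set [{v,w}] \<subseteq> E" by simp
  show "{e\<in>E. v\<in>e} \<subseteq> set [{v,w}]" using edges_at_v_sub[OF fsg, of v] N by auto
  fix i assume "i < length [{v,w}]"
  then have i: "i = 0" by simp
  have "card {e\<in>E. conf E {v,w} e} \<le> Bd E v w" using conf_card[OF fsg \<open>{v,w} \<in> E\<close>] .
  then show "card ({e\<in>E. conf E ([{v,w}]!i) e} - set (drop (Suc i) [{v,w}])) < K" using i B by simp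
qed simp

lemma Red2:
  assumes fsg: "finite_simple_graph V E" and N: "neighbors E v = {w,x}" "w \<noteq> x"
    and B: "Bd E v w \<le> K" "Bd E v x < K"
  shows "Red E v K"
  unfolding Red_def
proof (rule exI[of _ "[{v,w},{v,x}]"], intro conjI allI impI)
  have e: "{v,w} \<in> E" "{v,x} \<in> E" using N nbr_edge by fastforce+
  then show "set [{v,w},{v,x}] \<subseteq> E" by simp
  show "{e\<in>E. v\<in>e} \<subseteq> set [{v,w},{v,x}]" using edges_at_v_sub[OF fsg, of v] N by auto
  show "distinct [{v,w},{v,x}]" using N by (auto simp: doubleton_eq_iff)
  have cf: "conf E {v,w} {v,x}"
    by (rule conf_I[where y=x and x=v]) (use N in \<open>auto simp: doubleton_eq_iff\<close>)
  fix i assume "i < length [{v,w},{v,x}]"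
  then have i: "i = 0 \<or> i = 1" by auto
  then show "card ({e\<in>E. conf E ([{v,w},{v,x}]!i) e} - set (drop (Suc i) [{v,w},{v,x}])) < K"
  proof
    assume "i = 0"
    have "card ({e\<in>E. conf E {v,w} e} - {{v,x}}) = card {e\<in>E. conf E {v,w} e} - 1"
      using cf e fin_conf[OF fsg] by simp
    moreover have "card {e\<in>E. conf E {v,w} e} \<le> Bd E v w" using conf_card[OF fsg e(1)] .
    moreover have "card {e\<in>E. conf E {v,w} e} \<ge> 1"
    proof -
      have "{v,x} \<in> {e\<in>E. conf E {v,w} e}" using cf e by simp
      then have "{e\<in>E. conf E {v,w} e} \<noteq> {}" by blast
      then show ?thesis using fin_conf[OF fsg, of "{v,w}"] by (simp add: Suc_le_eq card_gt_0_iff)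
    qed
    ultimately show ?thesis using \<open>i = 0\<close> B by simp
  next
    assume "i = 1"
    have "card {e\<in>E. conf E {v,x} e} \<le> Bd E v x" using conf_card[OF fsg e(2)] .
    then show ?thesis using \<open>i = 1\<close> B by simp
  qed
qed

lemma Red3:
  assumes fsg: "finite_simple_graph V E" and N: "neighbors E v = {w,x}" "w \<noteq> x"
    and v': "v' \<in> neighbors E w" "v' \<noteq> v"
    and B: "Bd E v x \<le> K + 1" "Bd E w v' < K" "Bd E v w < K"
  shows "Red E v K"
  unfolding Red_def
proof (rule exI[of _ "[{v,x},{w,v'},{v,w}]"], intro conjI allI impI)
  have e: "{v,w} \<in> E" "{v,x} \<in> E" "{w,v'} \<in> E" using N v'(1) nbr_edge[of _ E] by auto
  then show "set [{v,x},{w,v'},{v,w}] \<subseteq> E" by simp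
  show "{e\<in>E. v\<in>e} \<subseteq> set [{v,x},{w,v'},{v,w}]" using edges_at_v_sub[OF fsg, of v] N by auto
  have wv: "w \<noteq> v" using fsg_nbr_irr[OF fsg, of v] N by auto
  show "distinct [{v,x},{w,v'},{v,w}]" using N wv v' by (auto simp: doubleton_eq_iff)
  have cf1: "conf E {v,x} {w,v'}"
    by (rule conf_I[where y=w and x=v]) (use N wv v' in \<open>auto simp: doubleton_eq_iff\<close>)
  have cf2: "conf E {v,x} {v,w}"
    by (rule conf_I[where y=w and x=v]) (use N in \<open>auto simp: doubleton_eq_iff\<close>)
  have ne: "{w,v'} \<noteq> {v,w}" using wv v' by (auto simp: doubleton_eq_iff)
  fix i assume "i < length [{v,x},{w,v'},{v,w}]"
  then have i: "i = 0 \<or> i = 1 \<or> i = 2" by auto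
  then show "card ({e\<in>E. conf E ([{v,x},{w,v'},{v,w}]!i) e} - set (drop (Suc i) [{v,x},{w,v'},{v,w}])) < K"
  proof (elim disjE)
    assume "i = 0"
    let ?C = "{e\<in>E. conf E {v,x} e}"
    have sub: "{{w,v'},{v,w}} \<subseteq> ?C" using cf1 cf2 e by auto
    have "card (?C - {{w,v'},{v,w}}) = card ?C - card {{w,v'},{v,w}}"
      by (rule card_Diff_subset) (use sub in auto)
    moreover have "card {{w,v'},{v,w}} = 2" using ne by simp
    moreover have "card ?C \<le> Bd E v x" using conf_card[OF fsg e(2)] .
    moreover have "card ?C \<ge> 2" using sub fin_conf[OF fsg] \<open>card {{w,v'},{v,w}} = 2\<close>
      by (metis card_mono)
    ultimately show ?thesis using \<open>i = 0\<close> B by simp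
  next
    assume "i = 1"
    have "card ({e\<in>E. conf E {w,v'} e} - {{v,w}}) \<le> card {e\<in>E. conf E {w,v'} e}"
      using fin_conf[OF fsg] by (simp add: card_Diff1_le)
    moreover have "card {e\<in>E. conf E {w,v'} e} \<le> Bd E w v'" using conf_card[OF fsg e(3)] .
    ultimately show ?thesis using \<open>i = 1\<close> B by simp
  next
    assume "i = 2"
    have "card {e\<in>E. conf E {v,w} e} \<le> Bd E v w" using conf_card[OF fsg e(1)] .
    then show ?thesis using \<open>i = 2\<close> B by simp
  qed
qed



lemma sumd_le:
  assumes fsg: "finite_simple_graph V E" and deg: "\<forall>u\<in>V. degree E u \<le> D"
    and A: "A \<subseteq> neighbors E w"
  shows "(\<Sum>y\<in>A. degree E y - 1) \<le> card A * (D - 1)"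
proof -
  have "\<And>y. y \<in> A \<Longrightarrow> degree E y - 1 \<le> D - 1" using A fsg_nbr_sub[OF fsg, of w] deg by force
  then show ?thesis using sum_bounded_above[of A "\<lambda>y. degree E y - 1" "D - 1"] by simp
qed

lemma card_N_minus:
  assumes fsg: "finite_simple_graph V E" and "z \<in> neighbors E w"
  shows "card (neighbors E w - {z}) = degree E w - 1"
  unfolding degree_def using assms fsg_nbr_fin[OF fsg] by simp

lemma deg_pos: "finite_simple_graph V E \<Longrightarrow> z \<in> neighbors E w \<Longrightarrow> degree E w \<ge> 1"
  unfolding degree_def using fsg_nbr_fin
  by (metis One_nat_def Suc_leI card_gt_0_iff empty_iff)

lemma tb1:
  assumes fsg: "finite_simple_graph V E" and deg: "\<forall>u\<in>V. degree E u \<le> D" and z: "z \<in> neighbors E w"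
  shows "(\<Sum>y\<in>neighbors E w - {z}. degree E y - 1) \<le> (degree E w - 1) * (D - 1)"
  using sumd_le[OF fsg deg, of "neighbors E w - {z}" w] card_N_minus[OF fsg z] by simp

definition kk :: "'a set set \<Rightarrow> 'a \<Rightarrow> nat" where
  "kk E w = card {y\<in>neighbors E w. degree E y = 2}"

lemma tb2:
  assumes fsg: "finite_simple_graph V E" and deg: "\<forall>u\<in>V. degree E u \<le> 4"
    and w: "degree E w = 4" and z: "z \<in> neighbors E w" "degree E z = 2"
  shows "(\<Sum>y\<in>neighbors E w - {z}. degree E y - 1) + 2 * kk E w \<le> 11" "kk E w \<ge> 1"
proof -
  define A where "A = neighbors E w - {z}"
  define Z where "Z = {y\<in>neighbors E w. degree E y = 2}"
  have fN: "finite (neighbors E w)" using fsg_nbr_fin[OF fsg] .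
  have fA: "finite A" "finite Z" unfolding A_def Z_def using fN by auto
  have cA: "card A = 3" unfolding A_def using card_N_minus[OF fsg z(1)] w by simp
  have zZ: "z \<in> Z" unfolding Z_def using z by auto
  have AZ: "A \<inter> Z = Z - {z}" unfolding A_def Z_def by auto
  have cAZ: "card (A \<inter> Z) = kk E w - 1" unfolding AZ kk_def Z_def[symmetric] using zZ fA by simp
  have kpos: "kk E w \<ge> 1" unfolding kk_def Z_def[symmetric] using zZ fA
    by (metis One_nat_def Suc_leI card_gt_0_iff empty_iff)
  have split: "(\<Sum>y\<in>A. degree E y - 1) = (\<Sum>y\<in>A \<inter> Z. degree E y - 1) + (\<Sum>y\<in>A - Z. degree E y - 1)"
    using fA by (metis sum.Int_Diff)
  have s1: "(\<Sum>y\<in>A \<inter> Z. degree E y - 1) = card (A \<inter> Z)"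
    by (simp add: Z_def)
  have s2: "(\<Sum>y\<in>A - Z. degree E y - 1) \<le> card (A - Z) * (4 - 1)"
    by (rule sumd_le[OF fsg deg, of _ w]) (auto simp: A_def)
  have cc: "card (A \<inter> Z) + card (A - Z) = 3" using cA fA card_Int_Diff[of A Z] by (metis card_Un_disjoint)
  show "(\<Sum>y\<in>neighbors E w - {z}. degree E y - 1) + 2 * kk E w \<le> 11"
  proof -
    have s2': "(\<Sum>y\<in>A - Z. degree E y - 1) \<le> card (A - Z) * 3" using s2 by simp
    show ?thesis using split s1 s2' cc cAZ kpos unfolding A_def[symmetric] by linarith
  qed
  show "kk E w \<ge> 1" by (rule kpos)
qed



lemma Bd_deg2:
  assumes fsg: "finite_simple_graph V E" and N: "neighbors E v = {w,x}" "w \<noteq> x"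
  shows "Bd E v w = 1 + (degree E w - 1) + (degree E x - 1) + (\<Sum>y\<in>neighbors E w - {v}. degree E y - 1)"
proof -
  have "degree E v = 2" unfolding degree_def N using N(2) by simp
  moreover have "neighbors E v - {w} = {x}" using N by auto
  ultimately show ?thesis unfolding Bd_def by simp
qed

lemma small_arith1: "(D::nat) \<le> 4 \<Longrightarrow> (D - 1) + (D - 1) * (D - 1) < 3 * D + 1"
proof -
  assume "D \<le> 4"
  then have "D = 0 \<or> D = 1 \<or> D = 2 \<or> D = 3 \<or> D = 4" by arith
  then show ?thesis by auto
qed

lemma small_arith2: "(D::nat) \<le> 3 \<Longrightarrow> 1 \<le> D \<Longrightarrow> 1 + (D - 1) + (D - 1) + (D - 1) * (D - 1) < 3 * D + 1"
proof -
  assume "D \<le> 3" "1 \<le> D"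
  then have "D = 1 \<or> D = 2 \<or> D = 3" by arith
  then show ?thesis by auto
qed

lemma red_low:
  assumes fsg: "finite_simple_graph V E" and v: "v \<in> V" and deg: "\<forall>u\<in>V. degree E u \<le> D"
    and D: "D \<le> 4" and dv: "degree E v \<le> 1"
  shows "Red E v (3 * D + 1)"
proof (cases "degree E v = 0")
  case True
  then have "neighbors E v = {}" unfolding degree_def using fsg_nbr_fin[OF fsg] by simp
  then show ?thesis using Red0[OF fsg] by blast
next
  case False
  then have "card (neighbors E v) = 1" using dv unfolding degree_def by simp
  then obtain w where N: "neighbors E v = {w}" by (meson card_1_singletonE)
  have wv: "w \<in> neighbors E v" using N by simp
  have vw: "v \<in> neighbors E w" using wv nbr_sym by metis
  have wV: "w \<in> V" using fsg_nbr_sub[OF fsg] wv by blast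
  have dw: "degree E w \<le> D" using deg wV by blast
  have t: "(\<Sum>y\<in>neighbors E w - {v}. degree E y - 1) \<le> (degree E w - 1) * (D - 1)"
    using tb1[OF fsg deg vw] .
  have t2: "(degree E w - 1) * (D - 1) \<le> (D - 1) * (D - 1)"
    by (rule mult_le_mono1) (use dw in arith)
  have "Bd E v w = (degree E w - 1) + (\<Sum>y\<in>neighbors E w - {v}. degree E y - 1)"
    unfolding Bd_def using N \<open>card (neighbors E v) = 1\<close> unfolding degree_def by simp
  also have "\<dots> \<le> (D - 1) + (D - 1) * (D - 1)" using t t2 dw by linarith
  also have "\<dots> < 3 * D + 1" using small_arith1[OF D] .
  finally show ?thesis using Red1[OF fsg N] by blast
qed

lemma nbrs2:
  assumes fsg: "finite_simple_graph V E" and "degree E v = 2"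
  obtains w x where "neighbors E v = {w,x}" "w \<noteq> x"
  using assms unfolding degree_def by (metis card_2_iff)

lemma red_deg2_small:
  assumes fsg: "finite_simple_graph V E" and v: "v \<in> V" and deg: "\<forall>u\<in>V. degree E u \<le> D"
    and D: "D \<le> 3" and dv: "degree E v = 2"
  shows "Red E v (3 * D + 1)"
proof -
  obtain w x where N: "neighbors E v = {w,x}" "w \<noteq> x" using nbrs2[OF fsg dv] by blast
  have N': "neighbors E v = {x,w}" "x \<noteq> w" using N by auto
  have wV: "w \<in> V" "x \<in> V" using fsg_nbr_sub[OF fsg, of v] N by auto
  have dw: "degree E w \<le> D" "degree E x \<le> D" using deg wV by auto
  have vw: "v \<in> neighbors E w" "v \<in> neighbors E x" using N nbr_sym by (metis insertCI)+
  have t: "(\<Sum>y\<in>neighbors E w - {v}. degree E y - 1) \<le> (D - 1) * (D - 1)"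
    using tb1[OF fsg deg vw(1)] dw(1) by (meson diff_le_mono le_trans mult_le_mono1)
  have tx: "(\<Sum>y\<in>neighbors E x - {v}. degree E y - 1) \<le> (D - 1) * (D - 1)"
    using tb1[OF fsg deg vw(2)] dw(2) by (meson diff_le_mono le_trans mult_le_mono1)
  have D1: "1 \<le> D" using deg v dv by force
  have "Bd E v w < 3 * D + 1" using Bd_deg2[OF fsg N] t dw small_arith2[OF D D1] by linarith
  moreover have "Bd E v x < 3 * D + 1" using Bd_deg2[OF fsg N'] tx dw small_arith2[OF D D1] by linarith
  ultimately show ?thesis using Red2[OF fsg N] by simp
qed

definition g :: "'a set set \<Rightarrow> 'a \<Rightarrow> real" where
  "g E w = (if degree E w = 4 then 1 / real (kk E w) else 0)"

lemma red_deg2_4: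
  assumes fsg: "finite_simple_graph V E" and v: "v \<in> V" and deg: "\<forall>u\<in>V. degree E u \<le> 4"
    and dv: "degree E v = 2" and nR: "\<not> Red E v 13"
  shows "(\<Sum>w\<in>neighbors E v. g E w) \<ge> 1"
proof -
  obtain w x where N: "neighbors E v = {w,x}" "w \<noteq> x" using nbrs2[OF fsg dv] by blast
  have N': "neighbors E v = {x,w}" "x \<noteq> w" using N by auto
  have wV: "w \<in> V" "x \<in> V" using fsg_nbr_sub[OF fsg, of v] N by auto
  have dw: "degree E w \<le> 4" "degree E x \<le> 4" using deg wV by auto
  have vw: "v \<in> neighbors E w" "v \<in> neighbors E x" using N nbr_sym by (metis insertCI)+
  have dw1: "degree E w \<ge> 1" "degree E x \<ge> 1" using deg_pos[OF fsg] vw by auto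
  define tw where "tw = (\<Sum>y\<in>neighbors E w - {v}. degree E y - 1)"
  define tx where "tx = (\<Sum>y\<in>neighbors E x - {v}. degree E y - 1)"
  have Bw: "Bd E v w = 1 + (degree E w - 1) + (degree E x - 1) + tw" using Bd_deg2[OF fsg N] tw_def by simp
  have Bx: "Bd E v x = 1 + (degree E x - 1) + (degree E w - 1) + tx" using Bd_deg2[OF fsg N'] tx_def by simp
  have tw1: "tw \<le> (degree E w - 1) * 3" using tb1[OF fsg deg vw(1)] tw_def by simp
  have tx1: "tx \<le> (degree E x - 1) * 3" using tb1[OF fsg deg vw(2)] tx_def by simp
  have sum: "(\<Sum>w\<in>neighbors E v. g E w) = g E w + g E x" using N by simp
  have g0: "g E w \<ge> 0" "g E x \<ge> 0" unfolding g_def by auto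
  have tw1': "tw + 3 \<le> 3 * degree E w" using tw1 dw1 by (cases "degree E w") auto
  have tx1': "tx + 3 \<le> 3 * degree E x" using tx1 dw1 by (cases "degree E x") auto
  have Bw': "Bd E v w + 1 = degree E w + degree E x + tw" using Bw dw1 by simp
  have Bx': "Bd E v x + 1 = degree E x + degree E w + tx" using Bx dw1 by simp
  have kw: "tw + 2 * kk E w \<le> 11" "kk E w \<ge> 1" if "degree E w = 4"
    using tb2[OF fsg deg that vw(1) dv] tw_def by auto
  have kx: "tx + 2 * kk E x \<le> 11" "kk E x \<ge> 1" if "degree E x = 4"
    using tb2[OF fsg deg that vw(2) dv] tx_def by auto
  have R3: "False" if "degree E w = 4" "degree E x = 4" "kk E w \<ge> 3" "kk E x \<ge> 2"
  proof -
    have "v \<in> {y\<in>neighbors E w. degree E y = 2}" using vw(1) dv by simp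
    then have "card ({y\<in>neighbors E w. degree E y = 2} - {v}) = kk E w - 1"
      unfolding kk_def using fsg_nbr_fin[OF fsg, of w] by simp
    then have "card ({y\<in>neighbors E w. degree E y = 2} - {v}) \<ge> 2" using that(3) by arith
    then have "{y\<in>neighbors E w. degree E y = 2} - {v} \<noteq> {}" by (metis card.empty le_zero_eq zero_neq_numeral)
    then obtain v' where v': "v' \<in> neighbors E w" "degree E v' = 2" "v' \<noteq> v" by blast
    have wv': "w \<in> neighbors E v'" using v'(1) nbr_sym by metis
    have s1: "(\<Sum>y\<in>neighbors E w - {v'}. degree E y - 1) + 2 * kk E w \<le> 11"
      using tb2[OF fsg deg that(1) v'(1,2)] by simp
    have s2: "(\<Sum>y\<in>neighbors E v' - {w}. degree E y - 1) \<le> (degree E v' - 1) * (4 - 1)"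
      using tb1[OF fsg deg wv'] .
    have "Bd E w v' < 13" unfolding Bd_def using s1 s2 v'(2) that(1,3) by simp
    moreover have "Bd E v x \<le> 13 + 1" using Bx' kx(1)[OF that(2)] that by linarith
    moreover have "Bd E v w < 13" using Bw' kw(1)[OF that(1)] that by linarith
    ultimately have "Red E v 13" using Red3[OF fsg N v'(1,3)] by blast
    then show False using nR by blast
  qed
  have R3': "False" if "degree E x = 4" "degree E w = 4" "kk E x \<ge> 3" "kk E w \<ge> 2"
  proof -
    have "v \<in> {y\<in>neighbors E x. degree E y = 2}" using vw(2) dv by simp
    then have "card ({y\<in>neighbors E x. degree E y = 2} - {v}) = kk E x - 1"
      unfolding kk_def using fsg_nbr_fin[OF fsg, of x] by simp
    then have "card ({y\<in>neighbors E x. degree E y = 2} - {v}) \<ge> 2" using that(3) by arith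
    then have "{y\<in>neighbors E x. degree E y = 2} - {v} \<noteq> {}" by (metis card.empty le_zero_eq zero_neq_numeral)
    then obtain v' where v': "v' \<in> neighbors E x" "degree E v' = 2" "v' \<noteq> v" by blast
    have xv': "x \<in> neighbors E v'" using v'(1) nbr_sym by metis
    have s1: "(\<Sum>y\<in>neighbors E x - {v'}. degree E y - 1) + 2 * kk E x \<le> 11"
      using tb2[OF fsg deg that(1) v'(1,2)] by simp
    have s2: "(\<Sum>y\<in>neighbors E v' - {x}. degree E y - 1) \<le> (degree E v' - 1) * (4 - 1)"
      using tb1[OF fsg deg xv'] .
    have "Bd E x v' < 13" unfolding Bd_def using s1 s2 v'(2) that(1,3) by simp
    moreover have "Bd E v w \<le> 13 + 1" using Bw' kw(1)[OF that(2)] that by linarith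
    moreover have "Bd E v x < 13" using Bx' kx(1)[OF that(1)] that by linarith
    ultimately have "Red E v 13" using Red3[OF fsg N' v'(1,3)] by blast
    then show False using nR by blast
  qed
  have d4: "degree E w \<le> 3 \<or> degree E w = 4" "degree E x \<le> 3 \<or> degree E x = 4" using dw by auto
  show ?thesis
  proof (cases "degree E w = 4")
    case w4: True
    show ?thesis
    proof (cases "degree E x = 4")
      case x4: True
      show ?thesis
      proof (cases "kk E w = 1 \<or> kk E x = 1 \<or> (kk E w = 2 \<and> kk E x = 2)")
        case True
        then show ?thesis unfolding sum using w4 x4 g0 unfolding g_def by auto
      next
        case False
        then have "(kk E w \<ge> 3 \<and> kk E x \<ge> 2) \<or> (kk E x \<ge> 3 \<and> kk E w \<ge> 2)"
          using kw(2)[OF w4] kx(2)[OF x4] by auto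
        then show ?thesis using R3 R3' w4 x4 by blast
      qed
    next
      case x3: False
      then have x3: "degree E x \<le> 3" using dw by auto
      show ?thesis
      proof (cases "kk E w = 1")
        case True
        then show ?thesis unfolding sum using w4 g0 unfolding g_def by auto
      next
        case False
        then have "kk E w \<ge> 2" using kw(2)[OF w4] by auto
        then have "Bd E v w \<le> 13" "Bd E v x < 13" using Bw' Bx' kw(1)[OF w4] w4 x3 tx1' by linarith+
        then have "Red E v 13" using Red2[OF fsg N] by simp
        then show ?thesis using nR by blast
      qed
    qed
  next
    case w3: False
    then have w3: "degree E w \<le> 3" using dw by auto
    show ?thesis
    proof (cases "degree E x = 4")
      case x4: True
      show ?thesis
      proof (cases "kk E x = 1")
        case True
        then show ?thesis unfolding sum using x4 g0 unfolding g_def by auto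
      next
        case False
        then have "kk E x \<ge> 2" using kx(2)[OF x4] by auto
        then have "Bd E v x \<le> 13" "Bd E v w < 13" using Bw' Bx' kx(1)[OF x4] x4 w3 tw1' by linarith+
        then have "Red E v 13" using Red2[OF fsg N'] by simp
        then show ?thesis using nR by blast
      qed
    next
      case False
      then have x3: "degree E x \<le> 3" using dw by auto
      have "Bd E v w < 13" "Bd E v x < 13" using Bw' Bx' w3 x3 tw1' tx1' by linarith+
      then have "Red E v 13" using Red2[OF fsg N] by simp
      then show ?thesis using nR by blast
    qed
  qed
qed



lemma discharge:
  assumes fsg: "finite_simple_graph V E" and degs: "\<forall>u\<in>V. 2 \<le> degree E u \<and> degree E u \<le> 4"
    and ch: "\<forall>v\<in>V. degree E v = 2 \<longrightarrow> (\<Sum>w\<in>neighbors E v. g E w) \<ge> 1"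
  shows "3 * card V \<le> 2 * card E"
proof -
  have fV: "finite V" using fsg unfolding finite_simple_graph_def by auto
  define V2 where "V2 = {v\<in>V. degree E v = 2}"
  define V4 where "V4 = {v\<in>V. degree E v = 4}"
  have fV2: "finite V2" unfolding V2_def using fV by auto
  have "real (card V2) = (\<Sum>v\<in>V2. 1)" by simp
  also have "\<dots> \<le> (\<Sum>v\<in>V2. \<Sum>w\<in>neighbors E v. g E w)"
    by (rule sum_mono) (use ch in \<open>auto simp: V2_def\<close>)
  also have "\<dots> = (\<Sum>v\<in>V2. \<Sum>w\<in>V. if w \<in> neighbors E v then g E w else 0)"
  proof (rule sum.cong[OF refl])
    fix v assume "v \<in> V2"
    have "{w\<in>V. w \<in> neighbors E v} = neighbors E v" using fsg_nbr_sub[OF fsg, of v] by auto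
    then show "(\<Sum>w\<in>neighbors E v. g E w) = (\<Sum>w\<in>V. if w \<in> neighbors E v then g E w else 0)"
      using fV sum.inter_filter[of V "g E" "\<lambda>w. w \<in> neighbors E v"] by simp
  qed
  also have "\<dots> = (\<Sum>w\<in>V. \<Sum>v\<in>V2. if w \<in> neighbors E v then g E w else 0)" by (rule sum.swap)
  also have "\<dots> = (\<Sum>w\<in>V. g E w * real (kk E w))"
  proof (rule sum.cong[OF refl])
    fix w assume w: "w \<in> V"
    have eq: "{v\<in>V2. w \<in> neighbors E v} = {y\<in>neighbors E w. degree E y = 2}"
    proof (intro set_eqI iffI)
      fix y assume "y \<in> {v\<in>V2. w \<in> neighbors E v}"
      then show "y \<in> {y\<in>neighbors E w. degree E y = 2}" unfolding V2_def using nbr_sym[of w E y] by auto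
    next
      fix y assume y: "y \<in> {y\<in>neighbors E w. degree E y = 2}"
      then have "y \<in> V" using fsg_nbr_sub[OF fsg, of w] by auto
      then show "y \<in> {v\<in>V2. w \<in> neighbors E v}" unfolding V2_def using y nbr_sym[of w E y] by auto
    qed
    have "(\<Sum>v\<in>V2. if w \<in> neighbors E v then g E w else 0) = (\<Sum>v\<in>{v\<in>V2. w \<in> neighbors E v}. g E w)"
      using fV2 sum.inter_filter[of V2 "\<lambda>_. g E w" "\<lambda>v. w \<in> neighbors E v"] by simp
    also have "\<dots> = g E w * real (kk E w)" unfolding eq kk_def by simp
    finally show "(\<Sum>v\<in>V2. if w \<in> neighbors E v then g E w else 0) = g E w * real (kk E w)" .
  qed
  also have "\<dots> \<le> (\<Sum>w\<in>V. if degree E w = 4 then 1 else 0)"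
    by (rule sum_mono) (auto simp: g_def)
  also have "\<dots> = real (card V4)"
    unfolding V4_def using fV sum.inter_filter[of V "\<lambda>_. 1::real" "\<lambda>w. degree E w = 4"] by simp
  finally have c24: "real (card V2) \<le> real (card V4)" .
  have "real (\<Sum>u\<in>V. degree E u) = (\<Sum>u\<in>V. real (degree E u))" by simp
  also have "\<dots> = (\<Sum>u\<in>V. 3 + ((if degree E u = 4 then 1 else 0) - (if degree E u = 2 then 1 else 0)))"
  proof (rule sum.cong[OF refl])
    fix u assume "u \<in> V"
    then have "degree E u = 2 \<or> degree E u = 3 \<or> degree E u = 4" using degs by force
    then show "real (degree E u) = 3 + ((if degree E u = 4 then 1 else 0) - (if degree E u = 2 then 1 else 0))"
      by auto
  qed
  also have "\<dots> = 3 * real (card V) + (real (card V4) - real (card V2))"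
  proof -
    have a: "(\<Sum>u\<in>V. (if degree E u = 4 then 1 else 0::real)) = real (card V4)"
      unfolding V4_def using fV sum.inter_filter[of V "\<lambda>_. 1::real" "\<lambda>w. degree E w = 4"] by simp
    have b: "(\<Sum>u\<in>V. (if degree E u = 2 then 1 else 0::real)) = real (card V2)"
      unfolding V2_def using fV sum.inter_filter[of V "\<lambda>_. 1::real" "\<lambda>w. degree E w = 2"] by simp
    show ?thesis using a b by (simp add: sum.distrib sum_subtractf)
  qed
  finally have "real (\<Sum>u\<in>V. degree E u) \<ge> 3 * real (card V)" using c24 by linarith
  then show ?thesis using handshake[OF fsg] by linarith
qed


definition sparse :: "'a set \<Rightarrow> 'a set set \<Rightarrow> bool" where
  "sparse V E \<longleftrightarrow> (\<forall>W F. subgraph W F V E \<and> W \<noteq> {} \<longrightarrow> 2 * card F < 3 * card W)"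

lemma sparse_whole:
  assumes "sparse V E" "V \<noteq> {}" "finite_simple_graph V E"
  shows "2 * card E < 3 * card V"
proof -
  have "subgraph V E V E" using assms(3) unfolding subgraph_def finite_simple_graph_def by auto
  then show ?thesis using assms(1,2) unfolding sparse_def by blast
qed

lemma exists_red:
  assumes fsg: "finite_simple_graph V E" and deg: "\<forall>u\<in>V. degree E u \<le> D" and D: "D \<le> 4"
    and sp: "sparse V E" and ne: "V \<noteq> {}"
  shows "\<exists>v\<in>V. Red E v (3 * D + 1)"
proof (cases "\<exists>v\<in>V. degree E v \<le> 1")
  case True
  then show ?thesis using red_low[OF fsg _ deg D] by blast
next
  case False
  then have d2: "\<forall>u\<in>V. 2 \<le> degree E u" by force
  have spE: "2 * card E < 3 * card V" using sparse_whole[OF sp ne fsg] .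
  show ?thesis
  proof (cases "D \<le> 3")
    case True
    have "\<exists>v\<in>V. degree E v = 2"
    proof (rule ccontr)
      assume "\<not> ?thesis"
      then have "\<forall>u\<in>V. 3 \<le> degree E u" using d2 by force
      then have "(\<Sum>u\<in>V. 3) \<le> (\<Sum>u\<in>V. degree E u)" by (intro sum_mono) auto
      then show False using handshake[OF fsg] spE by simp
    qed
    then show ?thesis using red_deg2_small[OF fsg _ deg True] by blast
  next
    case False
    then have D4: "D = 4" using D by simp
    show ?thesis
    proof (rule ccontr)
      assume nR: "\<not> ?thesis"
      have "\<forall>v\<in>V. degree E v = 2 \<longrightarrow> (\<Sum>w\<in>neighbors E v. g E w) \<ge> 1"
        using red_deg2_4[OF fsg _ deg[unfolded D4]] nR D4 by auto
      then have "3 * card V \<le> 2 * card E" using discharge[OF fsg] d2 deg D4 by auto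
      then show False using spE by simp
    qed
  qed
qed

lemma main:
  "\<forall>V E. card V = n \<longrightarrow> finite_simple_graph V E \<longrightarrow> (\<forall>u\<in>V. degree E u \<le> D) \<longrightarrow> D \<le> 4
     \<longrightarrow> sparse V E \<longrightarrow> (\<exists>c. strong_edge_coloring E c \<and> (\<forall>e\<in>E. c e < 3 * D + 1))"
proof (induction n rule: less_induct)
  case (less n)
  show ?case
  proof (intro allI impI)
    fix V :: "'a set" and E
    assume n: "card V = n" and fsg: "finite_simple_graph V E" and deg: "\<forall>u\<in>V. degree E u \<le> D"
      and D: "D \<le> 4" and sp: "sparse V E"
    show "\<exists>c. strong_edge_coloring E c \<and> (\<forall>e\<in>E. c e < 3 * D + 1)"
    proof (cases "V = {}")
      case True
      then have "E = {}" using fsg unfolding finite_simple_graph_def by fastforce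
      then show ?thesis unfolding strong_edge_coloring_def by auto
    next
      case False
      obtain v where v: "v \<in> V" "Red E v (3 * D + 1)" using exists_red[OF fsg deg D sp False] by blast
      have fV: "finite V" using fsg unfolding finite_simple_graph_def by auto
      have lt: "card (V - {v}) < n" using n v(1) fV by (metis card_Diff1_less)
      have fsg': "finite_simple_graph (V - {v}) {e\<in>E. v\<notin>e}" using fsg_del[OF fsg] .
      have deg': "\<forall>u\<in>V - {v}. degree {e\<in>E. v\<notin>e} u \<le> D"
      proof
        fix u assume u: "u \<in> V - {v}"
        have "neighbors {e\<in>E. v\<notin>e} u \<subseteq> neighbors E u" unfolding neighbors_def by auto
        then have "degree {e\<in>E. v\<notin>e} u \<le> degree E u"
          unfolding degree_def using fsg_nbr_fin[OF fsg] by (simp add: card_mono)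
        then show "degree {e\<in>E. v\<notin>e} u \<le> D" using deg u by force
      qed
      have sp': "sparse (V - {v}) {e\<in>E. v\<notin>e}"
        unfolding sparse_def
      proof (intro allI impI)
        fix W F assume "subgraph W F (V - {v}) {e\<in>E. v\<notin>e} \<and> W \<noteq> {}"
        then have "subgraph W F V E \<and> W \<noteq> {}" unfolding subgraph_def by auto
        then show "2 * card F < 3 * card W" using sp unfolding sparse_def by blast
      qed
      obtain c where c: "strong_edge_coloring {e\<in>E. v\<notin>e} c" "\<forall>e\<in>{e\<in>E. v\<notin>e}. c e < 3 * D + 1"
        using less.IH[OF lt] fsg' deg' D sp' by blast
      show ?thesis using reduce[OF fsg c v(2)] .
    qed
  qed
qed


theorem theorem2p3:
  fixes V :: "'a set" and E :: "'a set set"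
  assumes "finite_simple_graph V E"
    and "mad V E < 3"
    and "max_degree V E \<le> 4"
  shows "strong_chromatic_index E \<le> 3 * max_degree V E + 1"
proof -
  define D where "D = max_degree V E"
  have fV: "finite V" using assms(1) unfolding finite_simple_graph_def by auto
  have fE: "finite E" using fsg_finE[OF assms(1)] .
  have deg: "\<forall>u\<in>V. degree E u \<le> D"
    unfolding D_def max_degree_def using fV by (auto intro: Max_ge)
  define S where "S = {2 * real (card F) / real (card W) | W F. subgraph W F V E \<and> W \<noteq> {}}"
  have fS: "finite S"
  proof -
    have "S \<subseteq> (\<lambda>(W,F). 2 * real (card F) / real (card W)) ` (Pow V \<times> Pow E)"
      unfolding S_def subgraph_def by auto
    then show ?thesis using fV fE by (meson finite_Pow_iff finite_SigmaI finite_imageI finite_subset)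
  qed
  have sp: "sparse V E"
    unfolding sparse_def
  proof (intro allI impI)
    fix W F assume h: "subgraph W F V E \<and> W \<noteq> {}"
    then have "2 * real (card F) / real (card W) \<in> S" unfolding S_def by blast
    then have "2 * real (card F) / real (card W) \<le> mad V E" unfolding mad_def S_def[symmetric]
      using fS by (rule Max_ge[rotated])
    then have q: "2 * real (card F) / real (card W) < 3" using assms(2) by linarith
    have "W \<subseteq> V" using h unfolding subgraph_def by auto
    then have "card W > 0" using h fV by (meson card_gt_0_iff finite_subset)
    then have "2 * real (card F) < 3 * real (card W)" using q by (simp add: divide_less_eq)
    then show "2 * card F < 3 * card W" by linarith
  qed
  have D4: "D \<le> 4" using assms(3) unfolding D_def .
  obtain c where c: "strong_edge_coloring E c" "\<forall>e\<in>E. c e < 3 * D + 1"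
    using main[of "card V" D, rule_format, OF refl assms(1) _ D4 sp] deg by blast
  have "strong_chromatic_index E \<le> 3 * D + 1"
    unfolding strong_chromatic_index_def by (rule Least_le) (use c in blast)
  then show ?thesis unfolding D_def .
qed


end
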